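(* Let $f$ be a (possibly randomized) model and $P_{XY}$ a task distribution such that the loss satisfies $0 \le \ell(f(X),Y) \le 1$ almost surely. Let $\epsilon>0$ be the desired estimation error level and $0<\delta<1$ the failure probability. (Upper bound) There is an absolute constant $C>0$ such that, for all sufficiently small $\epsilon>0$ and all $\delta\in(0,1)$, there exists an online evaluation algorithm that is $(n,\epsilon,\delta)$-certified with $$n \le C\,\frac{\ln(1/\delta)+\ln\ln(1/\epsilon)}{\epsilon^{2}}.$$ (Matching lower bound) For any function $n'(\epsilon,\delta,f,P_{XY})$ such that $$\lim_{\epsilon,\delta\to 0} n'(\epsilon,\delta,f,P_{XY})\,\frac{\epsilon^{2}}{\ln(1/\delta)+\ln\ln(1/\epsilon)} = 0,$$ no algorithm can be $(n'(\epsilon,\delta,f,P_{XY}),\epsilon,\delta)$-certified for all sufficiently small $\epsilon$ and $\delta$.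
   Context: A model $f$ maps inputs $X$ to outputs; $P_{XY}$ is a joint distribution of (input, reference) pairs $(X,Y)$, and $\ell$ is a loss function. The prediction error is $R = R(f,P_{XY}) := \mathbb{E}_{(X,Y)\sim P_{XY}}\ell(f(X),Y)$. Test points are drawn i.i.d. from $P_{XY}$. An online evaluation algorithm sequentially selects test points, evaluates their losses $Z_i=\ell(f(X_i),Y_i)$, and after each step may output an estimate $\hat R$ of $R$ together with a confidence interval $[\hat R-\hat\epsilon,\hat R+\hat\epsilon]$; it terminates once it has produced a confidence interval of radius at most $\epsilon$ (the desired estimation error level), or when available test points are exhausted. Let $N$ denote the number of evaluated test points at termination. An algorithm is called $(n,\epsilon,\delta)$-certified if $$\mathbb{P}\big(N\ge n \text{ or the algorithm produces at least one confidence interval that does not contain } R\big)\le \delta.$$ (For the upper bound, the paper's witness is the vanilla sequential algorithm: at round $n=1,2,\dots$ draw a fresh point, evaluate its loss, set $\hat R_n = n^{-1}\sum_{i\le n}Z_i$ and $\epsilon_n=\sqrt{(2\ln(\log_2 n+1)+\ln(4/\delta))/n}$, and stop when $\epsilon_n\le\epsilon$.) *)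

theory Defs
  imports "HOL-Probability.Probability"
begin

text \<open>Loss distributions: the law of Z = loss(f(X),Y) under P_XY (and the model's randomness),
  a probability measure on the reals concentrated on [0,1].\<close>
definition loss_dist :: "real measure \<Rightarrow> bool" where
  "loss_dist D \<longleftrightarrow> prob_space D \<and> sets D = sets borel \<and> (AE z in D. 0 \<le> z \<and> z \<le> 1)"

definition risk :: "real measure \<Rightarrow> real" where
  "risk D = integral\<^sup>L D (\<lambda>z. z)"

text \<open>An online evaluation algorithm: given an internal random seed u and the losses
  Z_1..Z_n observed so far, it outputs (estimate, radius) after step n.\<close>
type_synonym alg = "real \<Rightarrow> real list \<Rightarrow> real \<times> real"

definition online_alg :: "alg \<Rightarrow> bool" where
  "online_alg A \<longleftrightarrow>
     (\<forall>n::nat. (\<lambda>(u, zs). A u (map zs [0..<n]))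
        \<in> borel \<Otimes>\<^sub>M PiM UNIV (\<lambda>_::nat. borel) \<rightarrow>\<^sub>M borel)"

text \<open>Sample space: uniform seed times an i.i.d. sequence of losses (zs i = Z_{i+1}).\<close>
definition sample_space :: "real measure \<Rightarrow> (real \<times> (nat \<Rightarrow> real)) measure" where
  "sample_space D = uniform_measure lborel {0..1} \<Otimes>\<^sub>M PiM UNIV (\<lambda>_::nat. D)"

definition est :: "alg \<Rightarrow> real \<Rightarrow> (nat \<Rightarrow> real) \<Rightarrow> nat \<Rightarrow> real" where
  "est A u zs k = fst (A u (map zs [0..<k]))"

definition rad :: "alg \<Rightarrow> real \<Rightarrow> (nat \<Rightarrow> real) \<Rightarrow> nat \<Rightarrow> real" where
  "rad A u zs k = snd (A u (map zs [0..<k]))"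

text \<open>Failure event: N \<ge> n (no radius \<le> eps at any step k \<ge> 1 with k < n; N = \<infinity> if it
  never terminates), or some interval produced at a step k \<le> N misses R.\<close>
definition failure_event :: "alg \<Rightarrow> real \<Rightarrow> real \<Rightarrow> real \<Rightarrow> (real \<times> (nat \<Rightarrow> real)) set" where
  "failure_event A R n eps =
     {(u, zs). (\<forall>k::nat. 1 \<le> k \<and> real k < n \<longrightarrow> rad A u zs k > eps)
       \<or> (\<exists>k::nat. 1 \<le> k \<and> (\<forall>j. 1 \<le> j \<and> j < k \<longrightarrow> rad A u zs j > eps)
              \<and> \<not> (est A u zs k - rad A u zs k \<le> R \<and> R \<le> est A u zs k + rad A u zs k))}"

definition certified :: "alg \<Rightarrow> real measure \<Rightarrow> real \<Rightarrow> real \<Rightarrow> real \<Rightarrow> bool" where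
  "certified A D n eps \<delta> \<longleftrightarrow> measure (sample_space D) (failure_event A (risk D) n eps) \<le> \<delta>"

end

theory Submission
  imports Defs
begin

definition trunc :: "nat \<Rightarrow> (nat \<Rightarrow> real) \<Rightarrow> nat \<Rightarrow> real" where
  "trunc K zs = (\<lambda>i. if i < K then zs i else 0)"

lemma trunc_Suc: "trunc (Suc K) (case_nat s w) = case_nat s (trunc K w)"
  by (auto simp: trunc_def fun_eq_iff split: nat.split)

lemma trunc_trunc[simp]: "trunc K (trunc K x) = trunc K x"
  by (simp add: trunc_def fun_eq_iff)

lemma trunc_meas[measurable]: "trunc K \<in> PiM UNIV (\<lambda>_. borel) \<rightarrow>\<^sub>M PiM UNIV (\<lambda>_. borel)"
  unfolding trunc_def by (rule measurable_PiM_single') auto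

lemma gen_lr:
  fixes D D' :: "real measure" and \<phi> :: "real \<Rightarrow> real" and r :: "real \<Rightarrow> ennreal"
  assumes D: "prob_space D" "sets D = sets borel" and D': "prob_space D'" "sets D' = sets borel"
    and \<phi>[measurable]: "\<phi> \<in> borel \<rightarrow>\<^sub>M borel" and r[measurable]: "r \<in> borel_measurable borel"
    and hyp: "\<And>h. h \<in> borel_measurable borel \<Longrightarrow> (\<integral>\<^sup>+z. h (\<phi> z) * r z \<partial>D) = (\<integral>\<^sup>+z. h z \<partial>D')"
  shows "H \<in> borel_measurable (PiM UNIV (\<lambda>_. borel)) \<Longrightarrow>
     (\<integral>\<^sup>+zs. H (trunc K (\<lambda>i. \<phi> (zs i))) * (\<Prod>i<K. r (zs i)) \<partial>PiM UNIV (\<lambda>_. D))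
     = (\<integral>\<^sup>+zs. H (trunc K zs) \<partial>PiM UNIV (\<lambda>_. D'))"
proof (induction K arbitrary: H)
  case 0
  interpret P: prob_space "PiM UNIV (\<lambda>_. D)" by (intro prob_space_PiM) (use D in auto)
  interpret P': prob_space "PiM UNIV (\<lambda>_. D')" by (intro prob_space_PiM) (use D' in auto)
  have t: "trunc 0 x = (\<lambda>_. 0)" for x by (simp add: trunc_def)
  show ?case by (simp add: t P.emeasure_space_1 P'.emeasure_space_1)
next
  case (Suc K)
  interpret S: sequence_space D 
    unfolding sequence_space_def product_prob_space_def product_prob_space_axioms_def product_sigma_finite_def
    using D by (auto intro: prob_space_imp_sigma_finite)
  interpret S': sequence_space D' 
    unfolding sequence_space_def product_prob_space_def product_prob_space_axioms_def product_sigma_finite_def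
    using D' by (auto intro: prob_space_imp_sigma_finite)
  have sP: "sets (PiM UNIV (\<lambda>_. D)) = sets (PiM UNIV (\<lambda>_. borel::real measure))"
           "sets (PiM UNIV (\<lambda>_. D')) = sets (PiM UNIV (\<lambda>_. borel::real measure))"
    using D D' by (auto intro!: sets_PiM_cong)
  note H[measurable] = Suc.prems
  have cn[measurable]: "(\<lambda>(s, w). case_nat s w) \<in> borel \<Otimes>\<^sub>M PiM UNIV (\<lambda>_. borel) \<rightarrow>\<^sub>M PiM UNIV (\<lambda>_. (borel::real measure))"
    apply (rule measurable_PiM_single')
    subgoal for i by (cases i; simp add: split_beta'; measurable)
    by (auto split: nat.split)
  have Hc[measurable]: "(\<lambda>(a, w). H (case_nat a (trunc K w))) \<in> borel_measurable (borel \<Otimes>\<^sub>M PiM UNIV (\<lambda>_. borel))"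
  proof -
    have "(\<lambda>(a, w). H (case_nat a (trunc K w))) = H o (\<lambda>(s, w). case_nat s w) o (\<lambda>(a, w). (a, trunc K w))"
      by (auto simp: fun_eq_iff)
    also have "\<dots> \<in> borel_measurable (borel \<Otimes>\<^sub>M PiM UNIV (\<lambda>_. borel))"
      by measurable
    finally show ?thesis .
  qed
  have phim[measurable]: "(\<lambda>zs i. \<phi> (zs i)) \<in> PiM UNIV (\<lambda>_. borel) \<rightarrow>\<^sub>M PiM UNIV (\<lambda>_. (borel::real measure))"
    by (rule measurable_PiM_single') auto
  have Htr: "(\<lambda>zs. H (trunc (Suc K) zs)) \<in> borel_measurable (PiM UNIV (\<lambda>_. borel))" by measurable
  define F where "F zs = H (trunc (Suc K) (\<lambda>i. \<phi> (zs i))) * (\<Prod>i<Suc K. r (zs i))" for zs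
  have Fm: "F \<in> borel_measurable (PiM UNIV (\<lambda>_. borel))" unfolding F_def by measurable
  define g where "g a = (\<integral>\<^sup>+w. H (case_nat a (trunc K w)) \<partial>PiM UNIV (\<lambda>_. D'))" for a
  have gm: "g \<in> borel_measurable borel"
  proof -
    have "(\<lambda>(a, w). H (case_nat a (trunc K w))) \<in> borel_measurable (borel \<Otimes>\<^sub>M PiM UNIV (\<lambda>_. D'))"
      using Hc by (subst measurable_cong_sets[OF sets_pair_measure_cong[OF refl sP(2)] refl])
    from S'.borel_measurable_nn_integral[OF this] show ?thesis unfolding g_def by simp
  qed
  have Hm1: "(\<lambda>w. H (case_nat a (trunc K w))) \<in> borel_measurable (PiM UNIV (\<lambda>_. borel))" for a
    using measurable_compose_Pair1[OF _ Hc, of a] by simp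
  have Hm0: "(\<lambda>w. H (case_nat a w)) \<in> borel_measurable (PiM UNIV (\<lambda>_. borel))" for a
  proof -
    have "(\<lambda>(a, w). H (case_nat a w)) \<in> borel_measurable (borel \<Otimes>\<^sub>M PiM UNIV (\<lambda>_. borel))"
      using measurable_comp[OF cn H] by (simp add: o_def split_beta')
    from measurable_compose_Pair1[OF _ this, of a] show ?thesis by simp
  qed
  have "(\<integral>\<^sup>+zs. H (trunc (Suc K) zs) \<partial>PiM UNIV (\<lambda>_. D')) = 
      (\<integral>\<^sup>+zs. H (trunc (Suc K) zs) \<partial>distr (D' \<Otimes>\<^sub>M PiM UNIV (\<lambda>_. D')) (PiM UNIV (\<lambda>_. D')) (\<lambda>(s, w). case_nat s w))"
    by (simp add: S'.PiM_iter)
  also have "\<dots> = (\<integral>\<^sup>+x. H (trunc (Suc K) (case_nat (fst x) (snd x))) \<partial>(D' \<Otimes>\<^sub>M PiM UNIV (\<lambda>_. D')))"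
    apply (subst nn_integral_distr)
    subgoal using cn by (subst measurable_cong_sets[OF sets_pair_measure_cong[OF D'(2) sP(2)] sP(2)])
    subgoal unfolding measurable_distr_eq1 by (subst measurable_cong_sets[OF sP(2) refl]) measurable
    by (simp add: split_beta')
  also have "\<dots> = (\<integral>\<^sup>+a. \<integral>\<^sup>+w. H (trunc (Suc K) (case_nat a w)) \<partial>PiM UNIV (\<lambda>_. D') \<partial>D')"
    apply (subst S'.nn_integral_fst[symmetric])
    subgoal apply (subst measurable_cong_sets[OF sets_pair_measure_cong[OF D'(2) sP(2)] refl])
      using measurable_comp[OF cn Htr] by (simp add: split_beta' o_def)
    by simp
  also have "\<dots> = (\<integral>\<^sup>+a. g a \<partial>D')" by (simp add: g_def trunc_Suc)
  finally have R: "(\<integral>\<^sup>+zs. H (trunc (Suc K) zs) \<partial>PiM UNIV (\<lambda>_. D')) = (\<integral>\<^sup>+a. g a \<partial>D')" .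
  have "(\<integral>\<^sup>+zs. F zs \<partial>PiM UNIV (\<lambda>_. D)) = 
      (\<integral>\<^sup>+zs. F zs \<partial>distr (D \<Otimes>\<^sub>M PiM UNIV (\<lambda>_. D)) (PiM UNIV (\<lambda>_. D)) (\<lambda>(s, w). case_nat s w))"
    by (simp add: S.PiM_iter)
  also have "\<dots> = (\<integral>\<^sup>+x. F (case_nat (fst x) (snd x)) \<partial>(D \<Otimes>\<^sub>M PiM UNIV (\<lambda>_. D)))"
    apply (subst nn_integral_distr)
    subgoal using cn by (subst measurable_cong_sets[OF sets_pair_measure_cong[OF D(2) sP(1)] sP(1)])
    subgoal unfolding measurable_distr_eq1 using Fm by (subst measurable_cong_sets[OF sP(1) refl])
    by (simp add: split_beta')
  also have "\<dots> = (\<integral>\<^sup>+s. \<integral>\<^sup>+w. F (case_nat s w) \<partial>PiM UNIV (\<lambda>_. D) \<partial>D)"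
    apply (subst S.nn_integral_fst[symmetric])
    subgoal apply (subst measurable_cong_sets[OF sets_pair_measure_cong[OF D(2) sP(1)] refl])
      using measurable_comp[OF cn Fm] by (simp add: split_beta' o_def)
    by simp
  also have "\<dots> = (\<integral>\<^sup>+s. (\<integral>\<^sup>+w. H (case_nat (\<phi> s) (trunc K (\<lambda>i. \<phi> (w i)))) * (\<Prod>i<K. r (w i)) \<partial>PiM UNIV (\<lambda>_. D)) * r s \<partial>D)"
  proof (rule nn_integral_cong)
    fix s
    have e1: "(\<lambda>i. \<phi> (case_nat s w i)) = case_nat (\<phi> s) (\<lambda>i. \<phi> (w i))" for w
      by (auto simp: fun_eq_iff split: nat.split)
    have "(\<integral>\<^sup>+w. F (case_nat s w) \<partial>PiM UNIV (\<lambda>_. D)) = (\<integral>\<^sup>+w. H (case_nat (\<phi> s) (trunc K (\<lambda>i. \<phi> (w i)))) * (\<Prod>i<K. r (w i)) * r s \<partial>PiM UNIV (\<lambda>_. D))"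
      by (intro nn_integral_cong) (simp add: F_def e1 trunc_Suc prod.lessThan_Suc_shift mult_ac del: prod.lessThan_Suc)
    also have "\<dots> = (\<integral>\<^sup>+w. H (case_nat (\<phi> s) (trunc K (\<lambda>i. \<phi> (w i)))) * (\<Prod>i<K. r (w i)) \<partial>PiM UNIV (\<lambda>_. D)) * r s"
      apply (rule nn_integral_multc)
      using Hm1 by (subst measurable_cong_sets[OF sP(1) refl]) measurable
    finally show "(\<integral>\<^sup>+w. F (case_nat s w) \<partial>PiM UNIV (\<lambda>_. D)) = (\<integral>\<^sup>+w. H (case_nat (\<phi> s) (trunc K (\<lambda>i. \<phi> (w i)))) * (\<Prod>i<K. r (w i)) \<partial>PiM UNIV (\<lambda>_. D)) * r s" .
  qed
  also have "\<dots> = (\<integral>\<^sup>+s. g (\<phi> s) * r s \<partial>D)"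
    apply (intro nn_integral_cong)
    subgoal for s using Suc.IH[OF Hm0[of "\<phi> s"]] by (simp add: g_def)
    done
  also have "\<dots> = (\<integral>\<^sup>+a. g a \<partial>D')" by (rule hyp[OF gm])
  finally show ?case using R by (simp add: F_def)
qed

definition Bern :: "real \<Rightarrow> real measure" where
  "Bern p = distr (measure_pmf (bernoulli_pmf p)) borel (\<lambda>b. if b then 1 else 0)"

lemma Bern_sets[simp]: "sets (Bern p) = sets borel"
  by (simp add: Bern_def)

lemma Bern_space[simp]: "space (Bern p) = UNIV"
  by (simp add: Bern_def)

lemma Bern_prob: "prob_space (Bern p)"
  unfolding Bern_def by (intro measure_pmf.prob_space_distr) auto

lemma Bern_nn: "0 \<le> p \<Longrightarrow> p \<le> 1 \<Longrightarrow> h \<in> borel_measurable borel \<Longrightarrow>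
   (\<integral>\<^sup>+z. h z \<partial>Bern p) = h 1 * ennreal p + h 0 * ennreal (1 - p)"
  unfolding Bern_def by (subst nn_integral_distr) auto

lemma Bern_int: "0 \<le> p \<Longrightarrow> p \<le> 1 \<Longrightarrow> risk (Bern p) = p"
  unfolding Bern_def risk_def by (subst integral_distr) auto

lemma Bern_loss: "0 \<le> p \<Longrightarrow> p \<le> 1 \<Longrightarrow> loss_dist (Bern p)"
proof -
  have "AE z in Bern p. z \<in> {0,1}" unfolding Bern_def by (subst AE_distr_iff) auto
  then show ?thesis unfolding loss_dist_def using Bern_prob[of p]
    by (auto elim!: eventually_mono)
qed

lemma lr_hyp:
  assumes "0 \<le> l" "l \<le> 1" "h \<in> borel_measurable borel"
  shows "(\<integral>\<^sup>+z. h z * ennreal (if z = 1 then 1 + l else 1 - l) \<partial>Bern (1/2)) = (\<integral>\<^sup>+z. h z \<partial>Bern ((1 + l)/2))"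
proof -
  have "(\<integral>\<^sup>+z. h z * ennreal (if z = 1 then 1 + l else 1 - l) \<partial>Bern (1/2)) = 
      h 1 * ennreal (1 + l) * ennreal (1/2) + h 0 * ennreal (1 - l) * ennreal (1 - 1/2)"
    using assms by (subst Bern_nn) auto
  also have "\<dots> = h 1 * ennreal ((1 + l)/2) + h 0 * ennreal (1 - (1 + l)/2)"
  proof -
    have e1: "ennreal (1+l) * ennreal (1/2) = ennreal ((1+l)/2)"
      by (subst ennreal_mult[symmetric]) (use assms in auto)
    have e2: "ennreal (1-l) * ennreal (1 - 1/2) = ennreal (1 - (1+l)/2)"
      by (subst ennreal_mult[symmetric]) (use assms in \<open>auto simp: field_simps\<close>)
    show ?thesis by (simp only: mult.assoc e1 e2)
  qed
  also have "\<dots> = (\<integral>\<^sup>+z. h z \<partial>Bern ((1 + l)/2))"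
    using assms by (subst Bern_nn) auto
  finally show ?thesis .
qed

lemma flip_hyp:
  assumes "h \<in> borel_measurable borel"
  shows "(\<integral>\<^sup>+z. h (if z = 1 then 0 else 1) * 1 \<partial>Bern (1/2)) = (\<integral>\<^sup>+z. h z \<partial>Bern (1/2))"
proof -
  have "(\<integral>\<^sup>+z. h (if z = 1 then 0 else 1) * 1 \<partial>Bern (1/2)) = h 0 * ennreal (1/2) + h 1 * ennreal (1 - 1/2)"
    by (subst Bern_nn) (use assms in auto)
  also have "\<dots> = h 1 * ennreal (1/2) + h 0 * ennreal (1 - 1/2)" by (simp add: add.commute)
  also have "\<dots> = (\<integral>\<^sup>+z. h z \<partial>Bern (1/2))" by (subst Bern_nn) (use assms in auto)
  finally show ?thesis .
qed

lemma sets_ss: "sets D = sets borel \<Longrightarrow> sets (sample_space D) = sets (borel \<Otimes>\<^sub>M PiM UNIV (\<lambda>_. (borel::real measure)))"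
  unfolding sample_space_def
  by (intro sets_pair_measure_cong) (auto intro!: sets_PiM_cong)

lemma alg_meas:
  assumes "online_alg A"
  shows rad_meas[measurable]: "(\<lambda>x. rad A (fst x) (snd x) k) \<in> borel_measurable (borel \<Otimes>\<^sub>M PiM UNIV (\<lambda>_. borel))"
    and est_meas[measurable]: "(\<lambda>x. est A (fst x) (snd x) k) \<in> borel_measurable (borel \<Otimes>\<^sub>M PiM UNIV (\<lambda>_. borel))"
proof -
  have m: "(\<lambda>x. A (fst x) (map (snd x) [0..<k])) \<in> borel \<Otimes>\<^sub>M PiM UNIV (\<lambda>_. borel) \<rightarrow>\<^sub>M borel \<Otimes>\<^sub>M borel"
    using assms unfolding online_alg_def by (simp add: split_beta' borel_prod)
  show "(\<lambda>x. rad A (fst x) (snd x) k) \<in> borel_measurable (borel \<Otimes>\<^sub>M PiM UNIV (\<lambda>_. borel))"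
    unfolding rad_def using m by measurable
  show "(\<lambda>x. est A (fst x) (snd x) k) \<in> borel_measurable (borel \<Otimes>\<^sub>M PiM UNIV (\<lambda>_. borel))"
    unfolding est_def using m by measurable
qed

lemma fe_meas:
  assumes "online_alg A"
  shows "failure_event A R n eps \<in> sets (borel \<Otimes>\<^sub>M PiM UNIV (\<lambda>_. (borel::real measure)))"
proof -
  note [measurable] = alg_meas[OF assms]
  have "Measurable.pred (borel \<Otimes>\<^sub>M PiM UNIV (\<lambda>_. borel)) (\<lambda>x. (\<forall>k::nat. 1 \<le> k \<and> real k < n \<longrightarrow> rad A (fst x) (snd x) k > eps)
       \<or> (\<exists>k::nat. 1 \<le> k \<and> (\<forall>j. 1 \<le> j \<and> j < k \<longrightarrow> rad A (fst x) (snd x) j > eps)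
              \<and> \<not> (est A (fst x) (snd x) k - rad A (fst x) (snd x) k \<le> R \<and> R \<le> est A (fst x) (snd x) k + rad A (fst x) (snd x) k)))"
    by measurable
  then show ?thesis unfolding failure_event_def Measurable.pred_def
    by (simp add: split_beta' space_pair_measure space_PiM)
qed

definition Gset :: "alg \<Rightarrow> real \<Rightarrow> real \<Rightarrow> (real \<times> (nat \<Rightarrow> real)) set" where
  "Gset A n e = {(u, zs). \<exists>k::nat. 1 \<le> k \<and> real k < n \<and> rad A u zs k \<le> e \<and> (\<forall>j. 1 \<le> j \<and> j < k \<longrightarrow> rad A u zs j > e)
      \<and> est A u zs k - rad A u zs k \<le> 1/2 \<and> 1/2 \<le> est A u zs k + rad A u zs k}"

lemma G_meas:
  assumes "online_alg A"
  shows "Gset A n e \<in> sets (borel \<Otimes>\<^sub>M PiM UNIV (\<lambda>_. (borel::real measure)))"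
proof -
  note [measurable] = alg_meas[OF assms]
  have "Measurable.pred (borel \<Otimes>\<^sub>M PiM UNIV (\<lambda>_. borel)) (\<lambda>x. \<exists>k::nat. 1 \<le> k \<and> real k < n \<and> rad A (fst x) (snd x) k \<le> e \<and> (\<forall>j. 1 \<le> j \<and> j < k \<longrightarrow> rad A (fst x) (snd x) j > e)
      \<and> est A (fst x) (snd x) k - rad A (fst x) (snd x) k \<le> 1/2 \<and> 1/2 \<le> est A (fst x) (snd x) k + rad A (fst x) (snd x) k)"
    by measurable
  then show ?thesis unfolding Gset_def Measurable.pred_def
    by (simp add: split_beta' space_pair_measure space_PiM)
qed

lemma G_sub2: "0 < e \<Longrightarrow> Gset A n e \<subseteq> failure_event A (1/2 + 3*e) n2 e"
  unfolding Gset_def failure_event_def by force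

lemma G_sub1: "- Gset A n e \<subseteq> failure_event A (1/2) n e"
proof
  fix x assume x: "x \<in> - Gset A n e"
  obtain u zs where xe: "x = (u, zs)" by force
  show "x \<in> failure_event A (1/2) n e"
  proof (rule ccontr)
    assume nf: "x \<notin> failure_event A (1/2) n e"
    then have "\<exists>k::nat. 1 \<le> k \<and> real k < n \<and> rad A u zs k \<le> e"
      unfolding failure_event_def xe by force
    then obtain k0 where k0: "1 \<le> k0 \<and> real k0 < n \<and> rad A u zs k0 \<le> e"
      and least: "\<And>j. j < k0 \<Longrightarrow> \<not> (1 \<le> j \<and> real j < n \<and> rad A u zs j \<le> e)"
      using exists_least_iff[of "\<lambda>k. 1 \<le> k \<and> real k < n \<and> rad A u zs k \<le> e"] by blast
    have lj: "\<forall>j. 1 \<le> j \<and> j < k0 \<longrightarrow> rad A u zs j > e"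
      using least k0 by force
    with nf k0 have "est A u zs k0 - rad A u zs k0 \<le> 1/2 \<and> 1/2 \<le> est A u zs k0 + rad A u zs k0"
      unfolding failure_event_def xe by force
    with k0 lj x show False unfolding Gset_def xe by force
  qed
qed

definition Bset :: "nat \<Rightarrow> (nat \<Rightarrow> real) set" where
  "Bset K = {zs. real K \<le> 2 * (\<Sum>i<K. if zs i = 1 then 1 else 0 :: real)}"

lemma B_meas: "Bset K \<in> sets (PiM UNIV (\<lambda>_. (borel::real measure)))"
proof -
  have "Measurable.pred (PiM UNIV (\<lambda>_. borel)) (\<lambda>zs. real K \<le> 2 * (\<Sum>i<K. if zs i = (1::real) then 1 else 0 :: real))"
    by measurable
  then show ?thesis unfolding Bset_def Measurable.pred_def by (simp add: space_PiM)
qed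

lemma B_trunc: "(trunc K zs \<in> Bset K) = (zs \<in> Bset K)"
  unfolding Bset_def trunc_def by simp

lemma sum_count: fixes zs :: "nat \<Rightarrow> real" shows "(\<Sum>i<K. if zs i = 1 then 1 else 0 :: real) = real (card {i\<in>{..<K}. zs i = 1})"
proof -
  have "(\<Sum>i\<in>{i\<in>{..<K}. zs i = 1}. (1::real)) = (\<Sum>i<K. if zs i = 1 then 1 else 0)"
    by (rule sum.inter_filter) simp
  then show ?thesis by simp
qed

lemma prod_bound:
  fixes l :: real
  assumes l: "0 \<le> l" "l \<le> 1" and B: "zs \<in> Bset K"
  shows "(1 - l^2)^K \<le> (\<Prod>i<K. if zs i = 1 then 1 + l else 1 - l)"
proof -
  define S where "S = {i\<in>{..<K}. zs i = 1}"
  define c where "c = card S"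
  have fS: "finite S" and sS: "S \<subseteq> {..<K}" by (auto simp: S_def)
  have cK: "c \<le> K" using card_mono[OF _ sS] by (simp add: c_def)
  have "real K \<le> 2 * real c" using B unfolding Bset_def sum_count by (simp add: c_def S_def)
  then have c2: "K \<le> 2 * c" by linarith
  have cc: "card ({..<K} - S) = K - c" using card_Diff_subset[OF fS sS] by (simp add: c_def)
  have "(\<Prod>i<K. if zs i = 1 then 1 + l else 1 - l) = (1 + l)^c * (1 - l)^(K - c)"
  proof -
    have e1: "{..<K} \<inter> {i. zs i = 1} = S" and e2: "{..<K} \<inter> - {i. zs i = 1} = {..<K} - S"
      by (auto simp: S_def)
    show ?thesis by (simp add: prod.If_cases e1 e2 cc c_def)
  qed
  also have "\<dots> \<ge> (1 + l)^(K - c) * (1 - l)^(K - c)"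
    by (intro mult_right_mono power_increasing) (use l cK c2 in auto)
  also have "(1 + l)^(K - c) * (1 - l)^(K - c) = (1 - l^2)^(K - c)"
    by (simp add: power_mult_distrib[symmetric] power2_eq_square algebra_simps)
  also have "(1 - l^2)^(K - c) \<ge> (1 - l^2)^K"
    by (intro power_decreasing) (use l in \<open>auto simp: power_le_one\<close>)
  finally show ?thesis .
qed

lemma PiM_sets_eq: "sets D = sets borel \<Longrightarrow> sets (PiM UNIV (\<lambda>_. D)) = sets (PiM UNIV (\<lambda>_. (borel::real measure)))"
  by (intro sets_PiM_cong) auto

lemma PB: "measure (PiM UNIV (\<lambda>_. Bern (1/2))) (Bset K) \<ge> 1/2"
proof -
  define P where "P = PiM (UNIV::nat set) (\<lambda>_. Bern (1/2))"
  interpret P: prob_space P unfolding P_def by (intro prob_space_PiM Bern_prob)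
  define fl where "fl (z::real) = (if z = 1 then 0 else (1::real))" for z
  have flm: "fl \<in> borel_measurable borel" unfolding fl_def[abs_def] by measurable
  have sP: "sets P = sets (PiM UNIV (\<lambda>_. (borel::real measure)))" unfolding P_def by (rule PiM_sets_eq) simp
  have Bm: "Bset K \<in> sets P" using B_meas sP by simp
  have Hm: "indicator (Bset K) \<in> borel_measurable (PiM UNIV (\<lambda>_. (borel::real measure)))"
    using B_meas by (rule borel_measurable_indicator)
  have g: "(\<integral>\<^sup>+zs. indicator (Bset K) (trunc K (\<lambda>i. fl (zs i))) * (\<Prod>i<K. (1::ennreal)) \<partial>P) = (\<integral>\<^sup>+zs. indicator (Bset K) (trunc K zs) \<partial>P)"
    unfolding P_def
    by (rule gen_lr[where r = "\<lambda>_. 1" and \<phi> = fl, OF Bern_prob _ Bern_prob _ _ _ _ Hm])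
       (use flm in \<open>auto simp: fl_def flip_hyp[simplified]\<close>)
  have e2: "(\<integral>\<^sup>+zs. indicator (Bset K) (trunc K zs) \<partial>P) = emeasure P (Bset K)"
  proof -
    have "\<And>zs. indicator (Bset K) (trunc K zs) = (indicator (Bset K) zs :: ennreal)"
      by (simp add: indicator_def B_trunc)
    then show ?thesis using Bm by simp
  qed
  have cover: "1 \<le> indicator (Bset K) zs + (indicator (Bset K) (trunc K (\<lambda>i. fl (zs i))) :: ennreal)" for zs
  proof -
    have s: "(\<Sum>i<K. if zs i = 1 then 1 else 0 :: real) + (\<Sum>i<K. if fl (zs i) = 1 then 1 else 0) = real K"
    proof -
      have "\<forall>x. (if zs x = 1 then 1 else 0) + (if fl (zs x) = 1 then 1 else 0) = (1::real)"
        by (simp add: fl_def)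
      then show ?thesis by (simp add: sum.distrib[symmetric])
    qed
    have t: "(\<Sum>i<K. if trunc K (\<lambda>i. fl (zs i)) i = 1 then 1 else 0 :: real) = (\<Sum>i<K. if fl (zs i) = 1 then 1 else 0)"
      by (simp add: trunc_def)
    show ?thesis
    proof (cases "zs \<in> Bset K")
      case True then show ?thesis by simp
    next
      case False
      then have "trunc K (\<lambda>i. fl (zs i)) \<in> Bset K" using s t unfolding Bset_def by auto
      then show ?thesis by simp
    qed
  qed
  have "1 = (\<integral>\<^sup>+zs. 1 \<partial>P)" using P.emeasure_space_1 by simp
  also have "\<dots> \<le> (\<integral>\<^sup>+zs. indicator (Bset K) zs + indicator (Bset K) (trunc K (\<lambda>i. fl (zs i))) \<partial>P)"
    by (intro nn_integral_mono cover)
  also have "\<dots> = (\<integral>\<^sup>+zs. indicator (Bset K) zs \<partial>P) + (\<integral>\<^sup>+zs. indicator (Bset K) (trunc K (\<lambda>i. fl (zs i))) \<partial>P)"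
  proof (rule nn_integral_add)
    show "indicator (Bset K) \<in> borel_measurable P" using Bm by (rule borel_measurable_indicator)
    have fm: "(\<lambda>zs i. fl (zs i)) \<in> PiM UNIV (\<lambda>_. borel) \<rightarrow>\<^sub>M PiM UNIV (\<lambda>_. (borel::real measure))"
      by (rule measurable_PiM_single') (use flm in auto)
    have "indicator (Bset K) o trunc K o (\<lambda>zs i. fl (zs i)) \<in> borel_measurable (PiM UNIV (\<lambda>_. (borel::real measure)))"
      by (intro measurable_comp[OF fm] measurable_comp[OF trunc_meas Hm])
    then have "(\<lambda>zs. indicator (Bset K) (trunc K (\<lambda>i. fl (zs i))) :: ennreal) \<in> borel_measurable (PiM UNIV (\<lambda>_. (borel::real measure)))"
      by (simp add: o_def)
    then show "(\<lambda>zs. indicator (Bset K) (trunc K (\<lambda>i. fl (zs i))) :: ennreal) \<in> borel_measurable P"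
      by (subst measurable_cong_sets[OF sP refl])
  qed
  also have "\<dots> = emeasure P (Bset K) + emeasure P (Bset K)"
  proof -
    have I1: "(\<integral>\<^sup>+zs. indicator (Bset K) zs \<partial>P) = emeasure P (Bset K)" using Bm by (rule nn_integral_indicator)
    have I2: "(\<integral>\<^sup>+zs. indicator (Bset K) (trunc K (\<lambda>i. fl (zs i))) \<partial>P) = emeasure P (Bset K)"
      using g e2 by simp
    show ?thesis by (simp only: I1 I2)
  qed
  also have "\<dots> = ennreal (measure P (Bset K) + measure P (Bset K))"
    by (simp only: P.emeasure_eq_measure ennreal_plus[symmetric] measure_nonneg)
  finally have "ennreal 1 \<le> ennreal (measure P (Bset K) + measure P (Bset K))" by simp
  then have "1 \<le> measure P (Bset K) + measure P (Bset K)"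
    by (subst (asm) ennreal_le_iff) auto
  then show ?thesis unfolding P_def by simp
qed

lemma numeric:
  fixes e n1 :: real
  assumes e: "0 < e" "e \<le> 1/100" and nb: "n1 * e^2 \<le> ln (1/e) / 144"
  shows "e < (1 - (6*e)^2)^(nat \<lceil>n1\<rceil>) * (1/2 - e)"
proof -
  define K where "K = nat \<lceil>n1\<rceil>"
  define x where "x = 36 * e^2"
  have ee: "e * e \<le> (1/100) * (1/100)" using e by (intro mult_mono) auto
  have x: "0 \<le> x" "x \<le> 1/2" using e ee by (auto simp: x_def power2_eq_square)
  have lnpos: "0 < ln (1/e)" using e by simp
  have Kb: "real K \<le> max n1 0 + 1" unfolding K_def by linarith
  have nb': "max n1 0 * e^2 \<le> ln (1/e) / 144" using nb lnpos by (auto simp: max_def)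
  have "ln (1 - x) \<ge> -x - 2 * x^2" using ln_one_minus_pos_lower_bound[OF x] by simp
  moreover have "x * x \<le> (1/2) * x" using x by (intro mult_right_mono) auto
  then have "2 * x^2 \<le> x" by (simp add: power2_eq_square)
  ultimately have lx: "ln (1 - x) \<ge> -2*x" by simp
  have pe: "(1 - x)^K = exp (real K * ln (1 - x))"
    using x by (subst exp_of_nat_mult) simp
  have a1: "real K * (-2*x) \<le> real K * ln (1-x)" using lx by (intro mult_left_mono) auto
  have a2: "- 2 * x * real K \<ge> - 2 * x * (max n1 0 + 1)"
    using Kb x by (intro mult_left_mono_neg) auto
  have a3: "- 2 * x * (max n1 0 + 1) = -72 * (max n1 0 * e^2) - 72 * e^2" by (simp add: x_def algebra_simps)
  have a4: "-72 * (max n1 0 * e^2) - 72 * e^2 \<ge> - ln (1/e) / 2 - 72 * e^2" using nb' by simp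
  have "real K * ln (1 - x) \<ge> - ln (1/e) / 2 - 72 * e^2" using a1 a2 a3 a4 by (simp add: algebra_simps)
  then have b1: "(1 - x)^K \<ge> exp (- ln (1/e) / 2 - 72 * e^2)"
    unfolding pe by simp
  define s where "s = exp (ln e / 2)"
  have s2: "s * s = e" using e by (simp add: s_def exp_add[symmetric])
  have spos: "0 < s" by (simp add: s_def)
  have s1: "s \<le> 1/10"
  proof (rule ccontr)
    assume "\<not> s \<le> 1/10"
    then have "(1/10) * (1/10) < s * s" using spos by (intro mult_strict_mono) auto
    then show False using s2 e by simp
  qed
  have "exp (- ln (1/e) / 2 - 72 * e^2) = s * exp (- 72 * e^2)"
  proof -
    have "- ln (1/e) / 2 - 72 * e^2 = ln e / 2 + (- 72 * e^2)" using e by (simp add: ln_div)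
    then show ?thesis by (simp only: exp_add s_def)
  qed
  note eqs = this
  have "exp (- 72 * e^2) \<ge> 1 - 72 * e^2" using exp_ge_add_one_self[of "-72*e^2"] by simp
  moreover have "72 * e^2 \<le> 1/100" using ee by (simp add: power2_eq_square)
  ultimately have "99/100 \<le> exp (- 72 * e^2)" by simp
  then have "s * (99/100) \<le> s * exp (- 72 * e^2)" using spos by (intro mult_left_mono) auto
  then have b2: "(1 - x)^K \<ge> s * (99/100)" using b1 eqs by simp
  have "e = s * s" using s2 by simp
  also have "\<dots> < s * ((99/100) * (1/2 - e))" using spos s1 e by (intro mult_strict_left_mono) auto
  also have "\<dots> = (s * (99/100)) * (1/2 - e)" by simp
  also have "\<dots> \<le> (1 - x)^K * (1/2 - e)" using b2 e by (intro mult_right_mono) auto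
  finally show ?thesis by (simp add: x_def K_def power_mult_distrib)
qed

lemma key_ineq:
  fixes l :: real and G :: "(real \<times> (nat \<Rightarrow> real)) set"
  assumes l: "0 \<le> l" "l \<le> 1"
    and Gm: "G \<in> sets (borel \<Otimes>\<^sub>M PiM UNIV (\<lambda>_. (borel::real measure)))"
    and Gt: "\<And>u zs. ((u, trunc K zs) \<in> G) = ((u, zs) \<in> G)"
  shows "ennreal ((1 - l^2)^K) * emeasure (sample_space (Bern (1/2))) (G \<inter> (UNIV \<times> Bset K))
         \<le> emeasure (sample_space (Bern ((1+l)/2))) G"
proof -
  define U where "U = uniform_measure lborel {0..(1::real)}"
  define P1 where "P1 = PiM (UNIV::nat set) (\<lambda>_. Bern (1/2))"
  define P2 where "P2 = PiM (UNIV::nat set) (\<lambda>_. Bern ((1+l)/2))"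
  interpret P1: prob_space P1 unfolding P1_def by (intro prob_space_PiM Bern_prob)
  interpret P2: prob_space P2 unfolding P2_def by (intro prob_space_PiM Bern_prob)
  have ss1: "sample_space (Bern (1/2)) = U \<Otimes>\<^sub>M P1" by (simp add: sample_space_def U_def P1_def)
  have ss2: "sample_space (Bern ((1+l)/2)) = U \<Otimes>\<^sub>M P2" by (simp add: sample_space_def U_def P2_def)
  have s1: "sets (U \<Otimes>\<^sub>M P1) = sets (borel \<Otimes>\<^sub>M PiM UNIV (\<lambda>_. (borel::real measure)))"
    using sets_ss[of "Bern (1/2)"] ss1 by simp
  have s2: "sets (U \<Otimes>\<^sub>M P2) = sets (borel \<Otimes>\<^sub>M PiM UNIV (\<lambda>_. (borel::real measure)))"
    using sets_ss[of "Bern ((1+l)/2)"] ss2 by simp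
  have sP1: "sets P1 = sets (PiM UNIV (\<lambda>_. (borel::real measure)))" unfolding P1_def by (rule PiM_sets_eq) simp
  have sP2: "sets P2 = sets (PiM UNIV (\<lambda>_. (borel::real measure)))" unfolding P2_def by (rule PiM_sets_eq) simp
  define c where "c = (1 - l^2)^K"
  define GB where "GB = G \<inter> (UNIV \<times> Bset K)"
  have GBm: "GB \<in> sets (borel \<Otimes>\<^sub>M PiM UNIV (\<lambda>_. (borel::real measure)))"
    unfolding GB_def using Gm B_meas by (intro sets.Int pair_measureI) auto
  have indG: "indicator G \<in> borel_measurable (borel \<Otimes>\<^sub>M PiM UNIV (\<lambda>_. (borel::real measure)))"
    using Gm by (rule borel_measurable_indicator)
  have indGB: "indicator GB \<in> borel_measurable (borel \<Otimes>\<^sub>M PiM UNIV (\<lambda>_. (borel::real measure)))"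
    using GBm by (rule borel_measurable_indicator)
  have slG: "(\<lambda>zs. indicator G (u, zs)) \<in> borel_measurable (PiM UNIV (\<lambda>_. (borel::real measure)))" for u
    using measurable_compose_Pair1[OF _ indG, of u] by simp
  have slGB: "(\<lambda>zs. indicator GB (u, zs)) \<in> borel_measurable (PiM UNIV (\<lambda>_. (borel::real measure)))" for u
    using measurable_compose_Pair1[OF _ indGB, of u] by simp
  have inner: "(\<integral>\<^sup>+zs. ennreal c * indicator GB (u, zs) \<partial>P1) \<le> (\<integral>\<^sup>+zs. indicator G (u, zs) \<partial>P2)" for u
  proof -
    have "(\<integral>\<^sup>+zs. indicator G (u, zs) \<partial>P2) = (\<integral>\<^sup>+zs. indicator G (u, trunc K zs) \<partial>P2)"
      by (intro nn_integral_cong) (simp add: indicator_def Gt)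
    also have "\<dots> = (\<integral>\<^sup>+zs. indicator G (u, trunc K (\<lambda>i. zs i)) * (\<Prod>i<K. ennreal (if zs i = 1 then 1 + l else 1 - l)) \<partial>P1)"
      unfolding P1_def P2_def
      by (rule gen_lr[where \<phi> = "\<lambda>z. z" and r = "\<lambda>z. ennreal (if z = 1 then 1 + l else 1 - l)" and H = "\<lambda>x. indicator G (u, x)", symmetric])
         (use l slG in \<open>auto simp: Bern_prob lr_hyp\<close>)
    also have "\<dots> \<ge> (\<integral>\<^sup>+zs. ennreal c * indicator GB (u, zs) \<partial>P1)"
    proof (intro nn_integral_mono)
      fix zs
      show "ennreal c * indicator GB (u, zs) \<le> indicator G (u, trunc K (\<lambda>i. zs i)) * (\<Prod>i<K. ennreal (if zs i = 1 then 1 + l else 1 - l))"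
      proof (cases "(u, zs) \<in> GB")
        case True
        then have "(u, trunc K zs) \<in> G" "zs \<in> Bset K" using Gt by (auto simp: GB_def)
        moreover have "ennreal c \<le> (\<Prod>i<K. ennreal (if zs i = 1 then 1 + l else 1 - l))"
        proof -
          have "(\<Prod>i<K. ennreal (if zs i = 1 then 1 + l else 1 - l)) = ennreal (\<Prod>i<K. (if zs i = 1 then 1 + l else 1 - l))"
            using l by (intro prod_ennreal) auto
          moreover have "c \<le> (\<Prod>i<K. (if zs i = 1 then 1 + l else 1 - l))"
            unfolding c_def using prod_bound[OF l \<open>zs \<in> Bset K\<close>] .
          ultimately show ?thesis by (simp add: ennreal_leI)
        qed
        ultimately show ?thesis using True by simp
      qed simp
    qed
    finally show ?thesis .
  qed
  have GB1: "GB \<in> sets (U \<Otimes>\<^sub>M P1)" using GBm s1 by simp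
  have G2: "G \<in> sets (U \<Otimes>\<^sub>M P2)" using Gm s2 by simp
  have indGB1: "indicator GB \<in> borel_measurable (U \<Otimes>\<^sub>M P1)" using GB1 by (rule borel_measurable_indicator)
  have indG2: "indicator G \<in> borel_measurable (U \<Otimes>\<^sub>M P2)" using G2 by (rule borel_measurable_indicator)
  have spU: "space U = UNIV" by (simp add: U_def)
  have "ennreal c * emeasure (U \<Otimes>\<^sub>M P1) GB = ennreal c * (\<integral>\<^sup>+x. indicator GB x \<partial>(U \<Otimes>\<^sub>M P1))"
    using nn_integral_indicator[OF GB1] by simp
  also have "\<dots> = ennreal c * (\<integral>\<^sup>+u. \<integral>\<^sup>+zs. indicator GB (u, zs) \<partial>P1 \<partial>U)"
    using P1.nn_integral_fst[OF indGB1] by simp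
  also have "\<dots> = (\<integral>\<^sup>+u. ennreal c * \<integral>\<^sup>+zs. indicator GB (u, zs) \<partial>P1 \<partial>U)"
    by (rule nn_integral_cmult[symmetric, OF P1.borel_measurable_nn_integral_fst[OF indGB1]])
  also have "\<dots> = (\<integral>\<^sup>+u. \<integral>\<^sup>+zs. ennreal c * indicator GB (u, zs) \<partial>P1 \<partial>U)"
  proof (intro nn_integral_cong)
    fix u
    have "(\<lambda>zs. indicator GB (u, zs) :: ennreal) \<in> borel_measurable P1"
      using measurable_compose_Pair1[OF _ indGB1, of u] spU by simp
    then show "ennreal c * (\<integral>\<^sup>+zs. indicator GB (u, zs) \<partial>P1) = (\<integral>\<^sup>+zs. ennreal c * indicator GB (u, zs) \<partial>P1)"
      by (rule nn_integral_cmult[symmetric])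
  qed
  also have "\<dots> \<le> (\<integral>\<^sup>+u. \<integral>\<^sup>+zs. indicator G (u, zs) \<partial>P2 \<partial>U)"
    by (intro nn_integral_mono inner)
  also have "\<dots> = (\<integral>\<^sup>+x. indicator G x \<partial>(U \<Otimes>\<^sub>M P2))"
    using P2.nn_integral_fst[OF indG2] by simp
  also have "\<dots> = emeasure (U \<Otimes>\<^sub>M P2) G"
    using nn_integral_indicator[OF G2] by simp
  finally show ?thesis unfolding ss1 ss2 GB_def c_def .
qed

lemma map_trunc: "k \<le> K \<Longrightarrow> map (trunc K zs) [0..<k] = map zs [0..<k]"
  by (auto simp: trunc_def)

lemma rad_est_trunc: "k \<le> K \<Longrightarrow> rad A u (trunc K zs) k = rad A u zs k \<and> est A u (trunc K zs) k = est A u zs k"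
  by (simp add: rad_def est_def map_trunc)

lemma Gset_cong:
  assumes "\<And>k j. real k < n \<Longrightarrow> j \<le> k \<Longrightarrow> rad A u zs' j = rad A u zs j \<and> est A u zs' j = est A u zs j"
  shows "((u, zs') \<in> Gset A n e) = ((u, zs) \<in> Gset A n e)"
proof -
  have "(1 \<le> k \<and> real k < n \<and> rad A u zs' k \<le> e \<and> (\<forall>j. 1 \<le> j \<and> j < k \<longrightarrow> rad A u zs' j > e)
      \<and> est A u zs' k - rad A u zs' k \<le> 1/2 \<and> 1/2 \<le> est A u zs' k + rad A u zs' k) =
      (1 \<le> k \<and> real k < n \<and> rad A u zs k \<le> e \<and> (\<forall>j. 1 \<le> j \<and> j < k \<longrightarrow> rad A u zs j > e)
      \<and> est A u zs k - rad A u zs k \<le> 1/2 \<and> 1/2 \<le> est A u zs k + rad A u zs k)" for k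
  proof (cases "real k < n")
    case True
    have "\<forall>j\<le>k. rad A u zs' j = rad A u zs j \<and> est A u zs' j = est A u zs j"
      using assms[OF True] by blast
    then have "(\<forall>j. 1 \<le> j \<and> j < k \<longrightarrow> rad A u zs' j > e) = (\<forall>j. 1 \<le> j \<and> j < k \<longrightarrow> rad A u zs j > e)"
      by auto
    then show ?thesis using assms[OF True order.refl] by auto
  qed simp
  then show ?thesis unfolding Gset_def by simp
qed

lemma ss_prob: "prob_space D \<Longrightarrow> prob_space (sample_space D)"
  unfolding sample_space_def
  by (intro prob_space_pair prob_space_PiM prob_space_uniform_measure) auto

lemma lower_core:
  assumes A: "online_alg A" and e: "0 < e" "e \<le> 1/100"
    and c1: "certified A (Bern (1/2)) n1 e e"
    and c2: "certified A (Bern (1/2 + 3*e)) n2 e e"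
    and nb: "n1 * e^2 \<le> ln (1/e) / 144"
  shows False
proof -
  define K where "K = nat \<lceil>n1\<rceil>"
  define l where "l = 6*e"
  have l: "0 \<le> l" "l \<le> 1" using e by (auto simp: l_def)
  have pl: "(1+l)/2 = 1/2 + 3*e" by (simp add: l_def)
  define G where "G = Gset A n1 e"
  have Gm: "G \<in> sets (borel \<Otimes>\<^sub>M PiM UNIV (\<lambda>_. (borel::real measure)))" unfolding G_def by (rule G_meas[OF A])
  have Gt: "((u, trunc K zs) \<in> G) = ((u, zs) \<in> G)" for u zs
    unfolding G_def
  proof (rule Gset_cong)
    fix k j assume kj: "real k < n1" "j \<le> k"
    have "real j < of_int \<lceil>n1\<rceil>" using le_of_int_ceiling[of n1] kj by linarith
    then have "int j < \<lceil>n1\<rceil>" by linarith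
    then have "j \<le> K" unfolding K_def by linarith
    then show "rad A u (trunc K zs) j = rad A u zs j \<and> est A u (trunc K zs) j = est A u zs j"
      by (rule rad_est_trunc)
  qed
  define SS1 where "SS1 = sample_space (Bern (1/2))"
  define SS2 where "SS2 = sample_space (Bern (1/2 + 3*e))"
  interpret S1: prob_space SS1 unfolding SS1_def by (intro ss_prob Bern_prob)
  interpret S2: prob_space SS2 unfolding SS2_def by (intro ss_prob Bern_prob)
  have sS1: "sets SS1 = sets (borel \<Otimes>\<^sub>M PiM UNIV (\<lambda>_. (borel::real measure)))" unfolding SS1_def by (rule sets_ss) simp
  have sS2: "sets SS2 = sets (borel \<Otimes>\<^sub>M PiM UNIV (\<lambda>_. (borel::real measure)))" unfolding SS2_def by (rule sets_ss) simp
  have spS1: "space SS1 = UNIV" using sets_eq_imp_space_eq[OF sS1] by (simp add: space_pair_measure space_PiM)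
  have G1: "G \<in> sets SS1" using Gm sS1 by simp
  have G2: "G \<in> sets SS2" using Gm sS2 by simp
  have F1: "failure_event A (1/2) n1 e \<in> sets SS1" using fe_meas[OF A] sS1 by simp
  have F2: "failure_event A (1/2 + 3*e) n2 e \<in> sets SS2" using fe_meas[OF A] sS2 by simp
  have mf1: "measure SS1 (failure_event A (1/2) n1 e) \<le> e"
    using c1 Bern_int[of "1/2"] by (simp add: certified_def SS1_def)
  have mf2: "measure SS2 (failure_event A (1/2 + 3*e) n2 e) \<le> e"
    using c2 Bern_int[of "1/2 + 3*e"] e by (simp add: certified_def SS2_def)
  have "measure SS2 G \<le> measure SS2 (failure_event A (1/2 + 3*e) n2 e)"
    unfolding G_def by (rule S2.finite_measure_mono[OF G_sub2[OF e(1)] F2])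
  then have mG2: "measure SS2 G \<le> e" using mf2 by linarith
  have "measure SS1 (- G) \<le> measure SS1 (failure_event A (1/2) n1 e)"
    unfolding G_def by (rule S1.finite_measure_mono[OF G_sub1 F1])
  then have mnG: "measure SS1 (- G) \<le> e" using mf1 by linarith
  have Bm1: "UNIV \<times> Bset K \<in> sets SS1" using sS1 B_meas by (simp add: pair_measureI)
  have mB: "measure SS1 (UNIV \<times> Bset K) \<ge> 1/2"
  proof -
    define U where "U = uniform_measure lborel {0..(1::real)}"
    define P1 where "P1 = PiM (UNIV::nat set) (\<lambda>_. Bern (1/2))"
    interpret P1: prob_space P1 unfolding P1_def by (intro prob_space_PiM Bern_prob)
    interpret U: prob_space U unfolding U_def by (intro prob_space_uniform_measure) auto
    have UNIVs: "UNIV \<in> sets U" using sets.top[of U] by (simp add: U_def)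
    have Bs: "Bset K \<in> sets P1" unfolding P1_def by (subst PiM_sets_eq[OF Bern_sets]) (rule B_meas)
    have "emeasure SS1 (UNIV \<times> Bset K) = emeasure U UNIV * emeasure P1 (Bset K)"
      unfolding SS1_def sample_space_def U_def[symmetric] P1_def[symmetric]
      by (rule P1.emeasure_pair_measure_Times[OF UNIVs Bs])
    also have "emeasure U UNIV = 1" using U.emeasure_space_1 by (simp add: U_def)
    finally have "emeasure SS1 (UNIV \<times> Bset K) = emeasure P1 (Bset K)" by simp
    then have "measure SS1 (UNIV \<times> Bset K) = measure P1 (Bset K)"
      unfolding measure_def by simp
    then show ?thesis using PB[of K] by (simp add: P1_def)
  qed
  have nG1: "- G \<in> sets SS1" using sets.compl_sets[OF G1] spS1 by (simp add: Compl_eq_Diff_UNIV)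
  have GB1: "G \<inter> (UNIV \<times> Bset K) \<in> sets SS1" using G1 Bm1 by (rule sets.Int)
  have mGB: "measure SS1 (G \<inter> (UNIV \<times> Bset K)) \<ge> 1/2 - e"
  proof -
    have "measure SS1 (UNIV \<times> Bset K) \<le> measure SS1 ((G \<inter> (UNIV \<times> Bset K)) \<union> (- G))"
      by (rule S1.finite_measure_mono[OF _ sets.Un[OF GB1 nG1]]) blast
    also have "\<dots> \<le> measure SS1 (G \<inter> (UNIV \<times> Bset K)) + measure SS1 (- G)"
      by (rule measure_Un_le[OF GB1 nG1])
    finally show ?thesis using mB mnG by simp
  qed
  define c where "c = (1 - l^2)^K"
  have c0: "0 \<le> c" using l unfolding c_def by (intro zero_le_power) (simp add: power_le_one)
  have "ennreal c * emeasure SS1 (G \<inter> (UNIV \<times> Bset K)) \<le> emeasure SS2 G"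
    using key_ineq[OF l Gm Gt] unfolding SS1_def SS2_def c_def pl .
  then have "ennreal (c * measure SS1 (G \<inter> (UNIV \<times> Bset K))) \<le> ennreal (measure SS2 G)"
    by (simp add: S1.emeasure_eq_measure S2.emeasure_eq_measure ennreal_mult c0)
  then have "c * measure SS1 (G \<inter> (UNIV \<times> Bset K)) \<le> measure SS2 G"
    by (subst (asm) ennreal_le_iff) auto
  then have "c * (1/2 - e) \<le> e" using mGB mG2 c0
    by (smt (verit) mult_left_mono)
  moreover have "e < c * (1/2 - e)" using numeric[OF e nb] by (simp add: c_def l_def K_def)
  ultimately show False by simp
qed

lemma risk_bounds:
  assumes "loss_dist D" shows "0 \<le> risk D" "risk D \<le> 1"
proof -
  interpret prob_space D using assms by (simp add: loss_dist_def)
  have sD: "sets D = sets borel" and ae: "AE z in D. 0 \<le> z \<and> z \<le> 1" using assms by (auto simp: loss_dist_def)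
  have mD: "measurable D borel = measurable borel borel" by (rule measurable_cong_sets[OF sD refl])
  have m: "(\<lambda>z. z) \<in> borel_measurable D" unfolding mD by simp
  have int: "integrable D (\<lambda>z::real. z)"
  proof -
    have ae': "AE z in D. norm z \<le> (1::real)" using ae by (rule eventually_mono) auto
    show ?thesis by (rule integrable_const_bound[OF ae' m])
  qed
  show "0 \<le> risk D" unfolding risk_def by (rule integral_nonneg_AE) (use ae in \<open>auto elim!: eventually_mono\<close>)
  have "risk D \<le> integral\<^sup>L D (\<lambda>_. 1::real)" unfolding risk_def
    by (rule integral_mono_AE[OF int]) (use ae in \<open>auto elim!: eventually_mono\<close>)
  then show "risk D \<le> 1" by (simp add: prob_space)
qed

lemma coord_facts:
  assumes D: "loss_dist D"
  defines "P \<equiv> PiM (UNIV::nat set) (\<lambda>_. D)"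
  shows "distr P borel (\<lambda>zs. zs i) = D"
    and "prob_space.indep_vars P (\<lambda>_. borel) (\<lambda>i zs. zs i) (UNIV::nat set)"
proof -
  have pD: "prob_space D" and sD: "sets D = sets borel" using D by (auto simp: loss_dist_def)
  interpret P: prob_space P unfolding P_def by (intro prob_space_PiM pD)
  have sP: "sets P = sets (PiM (UNIV::nat set) (\<lambda>_. (borel::real measure)))"
    unfolding P_def by (intro sets_PiM_cong) (auto simp: sD)
  have dc: "distr P borel (\<lambda>zs. zs i) = D" for i
  proof -
    have "distr P borel (\<lambda>zs. zs i) = distr P D (\<lambda>zs. zs i)"
      by (rule distr_cong) (auto simp: sD)
    also have "\<dots> = D" unfolding P_def by (rule distr_PiM_component) (auto simp: pD)
    finally show ?thesis .
  qed
  then show "distr P borel (\<lambda>zs. zs i) = D" .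
  have mc: "measurable P (borel::real measure) = measurable (PiM (UNIV::nat set) (\<lambda>_. (borel::real measure))) borel"
    by (rule measurable_cong_sets[OF sP refl])
  have rv: "(\<lambda>zs. zs i) \<in> measurable P borel" for i
  proof -
    have "(\<lambda>zs. zs i) \<in> measurable (PiM (UNIV::nat set) (\<lambda>_. (borel::real measure))) borel" by simp
    then show ?thesis using mc by simp
  qed
  have "distr P (PiM UNIV (\<lambda>_. borel)) (\<lambda>x. \<lambda>i\<in>UNIV. x i) = P"
  proof -
    have "distr P (PiM UNIV (\<lambda>_. borel)) (\<lambda>x. \<lambda>i\<in>UNIV. x i) = distr P P (\<lambda>x. x)"
      by (rule distr_cong) (auto simp: sP)
    also have "\<dots> = P" by (rule distr_id)
    finally show ?thesis .
  qed
  also have "P = PiM UNIV (\<lambda>i. distr P borel (\<lambda>zs. zs i))" by (simp only: dc) (simp add: P_def)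
  finally have eq: "distr P (PiM UNIV (\<lambda>_. borel)) (\<lambda>x. \<lambda>i\<in>UNIV. x i) = PiM UNIV (\<lambda>i. distr P borel (\<lambda>zs. zs i))" .
  show "prob_space.indep_vars P (\<lambda>_. borel) (\<lambda>i zs. zs i) (UNIV::nat set)"
  proof -
    have "prob_space.indep_vars P (\<lambda>_. borel) (\<lambda>i zs. zs i) (UNIV::nat set) \<longleftrightarrow> distr P (PiM UNIV (\<lambda>_. borel)) (\<lambda>x. \<lambda>i\<in>UNIV. x i) = PiM UNIV (\<lambda>i. distr P borel (\<lambda>zs. zs i))"
      by (rule P.indep_vars_iff_distr_eq_PiM[where I=UNIV and X="\<lambda>i zs. zs i" and M'="\<lambda>_. borel"]) (auto simp: rv)
    then show ?thesis using eq by blast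
  qed
qed

definition ualg :: "nat \<Rightarrow> real \<Rightarrow> alg" where
  "ualg m eps u xs = (if length xs < m then (1/2, 1) else (sum_list xs / real (length xs), eps))"

lemma sum_list_map_upt0: "sum_list (map zs [0..<n]) = (\<Sum>i<n. zs i)"
  by (simp add: interv_sum_list_conv_sum_set_nat atLeast0LessThan)

lemma ualg_online: "online_alg (ualg m eps)"
  unfolding online_alg_def
proof
  fix n
  show "(\<lambda>(u, zs). ualg m eps u (map zs [0..<n])) \<in> borel \<Otimes>\<^sub>M PiM UNIV (\<lambda>_. borel) \<rightarrow>\<^sub>M borel"
  proof (cases "n < m")
    case True
    then have "(\<lambda>(u, zs). ualg m eps u (map zs [0..<n])) = (\<lambda>_. (1/2, 1))"
      by (auto simp: ualg_def fun_eq_iff)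
    then show ?thesis by simp
  next
    case False
    then have eq: "(\<lambda>(u, zs). ualg m eps u (map zs [0..<n])) = (\<lambda>x. ((\<Sum>i<n. snd x i) / real n, eps))"
      by (auto simp: ualg_def fun_eq_iff sum_list_map_upt0)
    have "(\<lambda>x. ((\<Sum>i<n. snd x i) / real n, eps)) \<in> borel \<Otimes>\<^sub>M PiM UNIV (\<lambda>_. borel) \<rightarrow>\<^sub>M (borel \<Otimes>\<^sub>M (borel::real measure))"
      by measurable
    then show ?thesis unfolding eq by (simp add: borel_prod)
  qed
qed

lemma ualg_rad: "rad (ualg m eps) u zs k = (if k < m then 1 else eps)"
  by (simp add: rad_def ualg_def)

lemma ualg_est: "est (ualg m eps) u zs k = (if k < m then 1/2 else (\<Sum>i<k. zs i) / real k)"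
  by (simp add: est_def ualg_def sum_list_map_upt0)

lemma ualg_fail:
  assumes "1 \<le> m" "real m < nn" "0 \<le> R" "R \<le> 1" "eps < 1"
  shows "failure_event (ualg m eps) R nn eps \<subseteq> UNIV \<times> {zs. eps < \<bar>(\<Sum>i<m. zs i) / real m - R\<bar>}"
proof
  fix x assume x: "x \<in> failure_event (ualg m eps) R nn eps"
  obtain u zs where xe: "x = (u, zs)" by force
  have "\<not> (\<forall>k::nat. 1 \<le> k \<and> real k < nn \<longrightarrow> rad (ualg m eps) u zs k > eps)"
    using assms by (auto simp: ualg_rad intro!: exI[of _ m])
  then obtain k where k: "1 \<le> k" and pre: "\<forall>j. 1 \<le> j \<and> j < k \<longrightarrow> rad (ualg m eps) u zs j > eps"
    and miss: "\<not> (est (ualg m eps) u zs k - rad (ualg m eps) u zs k \<le> R \<and> R \<le> est (ualg m eps) u zs k + rad (ualg m eps) u zs k)"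
    using x unfolding xe failure_event_def by auto
  have "\<not> k < m" using miss assms by (auto simp: ualg_rad ualg_est)
  moreover have "\<not> m < k" using pre assms by (auto simp: ualg_rad)
  ultimately have "k = m" by simp
  then have "eps < \<bar>(\<Sum>i<m. zs i) / real m - R\<bar>" using miss assms by (auto simp: ualg_rad ualg_est)
  then show "x \<in> UNIV \<times> {zs. eps < \<bar>(\<Sum>i<m. zs i) / real m - R\<bar>}" by (simp add: xe)
qed

lemma hoeff_part:
  assumes D: "loss_dist D" and m: "1 \<le> m" and eps: "0 \<le> eps"
  shows "measure (PiM (UNIV::nat set) (\<lambda>_. D)) {zs. eps < \<bar>(\<Sum>i<m. zs i) / real m - risk D\<bar>}
          \<le> 2 * exp (-2 * real m * eps^2)"
proof -
  define P where "P = PiM (UNIV::nat set) (\<lambda>_. D)"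
  have pD: "prob_space D" and sD: "sets D = sets borel" using D by (auto simp: loss_dist_def)
  interpret P: prob_space P unfolding P_def by (intro prob_space_PiM pD)
  have sP: "sets P = sets (PiM (UNIV::nat set) (\<lambda>_. (borel::real measure)))"
    unfolding P_def by (intro sets_PiM_cong) (auto simp: sD)
  have spP: "space P = UNIV" using sets_eq_imp_space_eq[OF sP] by (simp add: space_PiM)
  have mc: "measurable P (borel::real measure) = measurable (PiM (UNIV::nat set) (\<lambda>_. (borel::real measure))) borel"
    by (rule measurable_cong_sets[OF sP refl])
  have rv: "(\<lambda>zs. zs i) \<in> measurable P borel" for i
  proof -
    have "(\<lambda>zs. zs i) \<in> measurable (PiM (UNIV::nat set) (\<lambda>_. (borel::real measure))) borel" by simp
    then show ?thesis using mc by simp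
  qed
  have dc: "distr P borel (\<lambda>zs. zs i) = D" for i using coord_facts(1)[OF D] by (simp add: P_def)
  have ind: "prob_space.indep_vars P (\<lambda>_. borel) (\<lambda>i zs. zs i) (UNIV::nat set)"
    using coord_facts(2)[OF D] by (simp add: P_def)
  have ind2: "prob_space.indep_vars P (\<lambda>_. borel) (\<lambda>i zs. zs i) {..<m}"
    by (rule P.indep_vars_subset[OF ind]) auto
  have ae: "AE zs in P. zs 0 \<in> {0..1}"
  proof -
    have "AE z in D. z \<in> {0..1}" using D unfolding loss_dist_def by (auto elim!: eventually_mono)
    then have "AE z in distr P borel (\<lambda>zs. zs 0). z \<in> {0..1}" by (simp only: dc)
    then show ?thesis by (subst (asm) AE_distr_iff) (auto simp: rv)
  qed
  have ae1: "AE x in P. 0 \<le> x 0" using ae by (rule eventually_mono) auto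
  have ae2: "AE x in P. x 0 \<le> 1" using ae by (rule eventually_mono) auto
  have mu: "P.expectation (\<lambda>zs. zs 0) = risk D"
  proof -
    have "P.expectation (\<lambda>zs. zs 0) = integral\<^sup>L (distr P borel (\<lambda>zs. zs 0)) (\<lambda>z. z)"
      by (rule integral_distr[symmetric]) (auto simp: rv)
    then show ?thesis by (simp add: dc risk_def)
  qed
  interpret H: Hoeffding_ineq_iid P "{..<m}" "\<lambda>i zs. zs i" "\<lambda>zs. zs 0" 0 1 "P.expectation (\<lambda>zs. zs 0)"
  proof unfold_locales
    show "prob_space.indep_vars P (\<lambda>_. borel) (\<lambda>i zs. zs i) {..<m}" by (rule ind2)
  qed (use ae1 ae2 in \<open>auto simp: dc rv\<close>)
  have "measure P {x \<in> space P. eps \<le> \<bar>(\<Sum>i\<in>{..<m}. x i) / real (card {..<m::nat}) - P.expectation (\<lambda>zs. zs 0)\<bar>}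
        \<le> 2 * exp (- 2 * real (card {..<m::nat}) * eps\<^sup>2 / (1 - 0)\<^sup>2)"
    by (rule H.Hoeffding_ineq_abs_ge') (use eps m in \<open>auto simp: lessThan_empty_iff\<close>)
  then have h: "measure P {x \<in> space P. eps \<le> \<bar>(\<Sum>i<m. x i) / real m - risk D\<bar>} \<le> 2 * exp (-2 * real m * eps^2)"
    by (simp add: mu)
  have "measure P {zs. eps < \<bar>(\<Sum>i<m. zs i) / real m - risk D\<bar>} \<le> measure P {x \<in> space P. eps \<le> \<bar>(\<Sum>i<m. x i) / real m - risk D\<bar>}"
  proof (rule P.finite_measure_mono)
    show "{zs. eps < \<bar>(\<Sum>i<m. zs i) / real m - risk D\<bar>} \<subseteq> {x \<in> space P. eps \<le> \<bar>(\<Sum>i<m. x i) / real m - risk D\<bar>}"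
      using spP by auto
    have "(\<lambda>x. eps \<le> \<bar>(\<Sum>i<m. x i) / real m - risk D\<bar>) \<in> measurable P (count_space UNIV)"
      using rv by measurable
    then show "{x \<in> space P. eps \<le> \<bar>(\<Sum>i<m. x i) / real m - risk D\<bar>} \<in> P.events"
      by (rule measurable_sets_Collect) simp
  qed
  with h show ?thesis unfolding P_def by simp
qed

lemma ss_times:
  assumes D: "loss_dist D" and E: "E \<in> sets (PiM (UNIV::nat set) (\<lambda>_. (borel::real measure)))"
  shows "measure (sample_space D) (UNIV \<times> E) = measure (PiM (UNIV::nat set) (\<lambda>_. D)) E"
    and "UNIV \<times> E \<in> sets (sample_space D)"
proof -
  have pD: "prob_space D" and sD: "sets D = sets borel" using D by (auto simp: loss_dist_def)
  define U where "U = uniform_measure lborel {0..(1::real)}"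
  define P where "P = PiM (UNIV::nat set) (\<lambda>_. D)"
  interpret P: prob_space P unfolding P_def by (intro prob_space_PiM pD)
  interpret U: prob_space U unfolding U_def by (intro prob_space_uniform_measure) auto
  have UNIVs: "UNIV \<in> sets U" using sets.top[of U] by (simp add: U_def)
  have Es: "E \<in> sets P" unfolding P_def by (subst PiM_sets_eq[OF sD]) (rule E)
  have "emeasure (sample_space D) (UNIV \<times> E) = emeasure U UNIV * emeasure P E"
    unfolding sample_space_def U_def[symmetric] P_def[symmetric]
    by (rule P.emeasure_pair_measure_Times[OF UNIVs Es])
  also have "emeasure U UNIV = 1" using U.emeasure_space_1 by (simp add: U_def)
  finally have "emeasure (sample_space D) (UNIV \<times> E) = emeasure P E" by simp
  then show "measure (sample_space D) (UNIV \<times> E) = measure (PiM (UNIV::nat set) (\<lambda>_. D)) E"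
    unfolding measure_def P_def by simp
  show "UNIV \<times> E \<in> sets (sample_space D)"
    unfolding sample_space_def U_def[symmetric] P_def[symmetric] using UNIVs Es by (rule pair_measureI)
qed

lemma upper:
  "\<exists>C>0. \<exists>eps0>0. \<forall>eps \<delta>. 0 < eps \<and> eps < eps0 \<and> 0 < \<delta> \<and> \<delta> < 1 \<longrightarrow>
      (\<exists>A. online_alg A \<and>
         (\<forall>D. loss_dist D \<longrightarrow>
            certified A D (C * (ln (1/\<delta>) + ln (ln (1/eps))) / eps^2) eps \<delta>))"
proof -
 have main: "\<exists>A. online_alg A \<and> (\<forall>D. loss_dist D \<longrightarrow>
            certified A D (1 * (ln (1/\<delta>) + ln (ln (1/eps))) / eps^2) eps \<delta>)"
   if a: "0 < eps \<and> eps < exp (- exp 2) \<and> 0 < \<delta> \<and> \<delta> < 1" for eps \<delta> :: real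
 proof -
  from a have e: "0 < eps" "eps < exp (- exp 2)" and d: "0 < \<delta>" "\<delta> < 1" by auto
  have e1: "eps < 1" using e(2) by (smt (verit) exp_gt_zero exp_less_one_iff)
  have "ln eps < - exp 2" using e by (metis ln_exp ln_less_cancel_iff exp_gt_zero)
  then have l1: "ln (1/eps) > exp 2" using e by (simp add: ln_div)
  have L: "ln (ln (1/eps)) > 2"
  proof -
    have "ln (exp 2) < ln (ln (1/eps))" using l1 exp_gt_zero[of 2] by (subst ln_less_cancel_iff) linarith+
    then show ?thesis by simp
  qed
  have ld: "ln (1/\<delta>) > 0" using d by simp
  have l2: "ln (2/\<delta>) = ln 2 + ln (1/\<delta>)" using d by (simp add: ln_div)
  have ln2: "ln (2::real) < 1" by (rule ln_2_less_1)
  have ln2p: "0 < ln (2::real)" by simp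
  define r where "r = ln (2/\<delta>) / (2 * eps^2)"
  define m where "m = nat \<lceil>r\<rceil>"
  have l2p: "0 < ln (2/\<delta>)" using l2 ld ln2p by linarith
  have rpos: "r > 0" unfolding r_def using l2p e by (intro divide_pos_pos) auto
  have m1: "1 \<le> m" unfolding m_def using rpos by linarith
  have rm: "real m = of_int \<lceil>r\<rceil>" using rpos by (simp add: m_def)
  have mr: "r \<le> real m" "real m < r + 1" unfolding rm using ceiling_correct[of r] by linarith+
  have e2: "eps^2 < 1" using e e1 by (simp add: abs_square_less_1)
  have "r + 1 = (ln 2 + ln (1/\<delta>) + 2 * eps^2) / (2 * eps^2)" using e by (simp add: r_def l2 field_simps)
  also have "\<dots> < (2 * ln (1/\<delta>) + 2 * ln (ln (1/eps))) / (2 * eps^2)"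
    using ln2 ld L e2 e by (intro divide_strict_right_mono) auto
  also have "\<dots> = 1 * (ln (1/\<delta>) + ln (ln (1/eps))) / eps^2" using e by (simp add: field_simps)
  finally have mlt: "real m < 1 * (ln (1/\<delta>) + ln (ln (1/eps))) / eps^2" using mr by linarith
  have hb: "2 * exp (-2 * real m * eps^2) \<le> \<delta>"
  proof -
    have "ln (2/\<delta>) \<le> 2 * real m * eps^2" using mr(1) e unfolding r_def by (simp add: field_simps)
    then have "exp (-2 * real m * eps^2) \<le> exp (- ln (2/\<delta>))" by simp
    also have "\<dots> = \<delta> / 2" using d by (simp add: exp_minus)
    finally show ?thesis by simp
  qed
  show "\<exists>A. online_alg A \<and> (\<forall>D. loss_dist D \<longrightarrow>
            certified A D (1 * (ln (1/\<delta>) + ln (ln (1/eps))) / eps^2) eps \<delta>)"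
  proof (intro exI[of _ "ualg m eps"] conjI allI impI ualg_online)
    fix D assume D: "loss_dist D"
    define E where "E = {zs::nat \<Rightarrow> real. eps < \<bar>(\<Sum>i<m. zs i) / real m - risk D\<bar>}"
    have Em: "E \<in> sets (PiM (UNIV::nat set) (\<lambda>_. (borel::real measure)))"
    proof -
      have "Measurable.pred (PiM (UNIV::nat set) (\<lambda>_. (borel::real measure))) (\<lambda>zs. eps < \<bar>(\<Sum>i<m. zs i) / real m - risk D\<bar>)"
        by measurable
      then show ?thesis unfolding E_def Measurable.pred_def by (simp add: space_PiM)
    qed
    interpret S: prob_space "sample_space D" using D by (intro ss_prob) (simp add: loss_dist_def)
    have "measure (sample_space D) (failure_event (ualg m eps) (risk D) (1 * (ln (1/\<delta>) + ln (ln (1/eps))) / eps^2) eps)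
          \<le> measure (sample_space D) (UNIV \<times> E)"
      unfolding E_def
      by (rule S.finite_measure_mono[OF ualg_fail ss_times(2)[OF D Em[unfolded E_def]]])
         (use m1 mlt risk_bounds[OF D] e1 in auto)
    also have "\<dots> = measure (PiM (UNIV::nat set) (\<lambda>_. D)) E" by (rule ss_times(1)[OF D Em])
    also have "\<dots> \<le> 2 * exp (-2 * real m * eps^2)" unfolding E_def
      by (rule hoeff_part[OF D m1]) (use e in simp)
    also have "\<dots> \<le> \<delta>" by (rule hb)
    finally show "certified (ualg m eps) D (1 * (ln (1/\<delta>) + ln (ln (1/eps))) / eps^2) eps \<delta>"
      unfolding certified_def .
  qed
 qed
 show ?thesis
   by (intro exI[of _ "1::real"] exI[of _ "exp (- exp 2)"] conjI allI impI main) auto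
qed

lemma lower:
  assumes lim: "\<forall>D. loss_dist D \<longrightarrow>
         ((\<lambda>(eps, \<delta>). n' eps \<delta> D * eps^2 / (ln (1/\<delta>) + ln (ln (1/eps)))) \<longlongrightarrow> 0)
           (at_right (0::real) \<times>\<^sub>F at_right (0::real))"
  shows "\<not> (\<exists>A :: real \<Rightarrow> real \<Rightarrow> alg.
              (\<forall>eps \<delta>. online_alg (A eps \<delta>)) \<and>
              (\<exists>eps0>0. \<exists>\<delta>0>0. \<forall>eps \<delta>. 0 < eps \<and> eps < eps0 \<and> 0 < \<delta> \<and> \<delta> < \<delta>0 \<longrightarrow>
                 (\<forall>D. loss_dist D \<longrightarrow> certified (A eps \<delta>) D (n' eps \<delta> D) eps \<delta>)))"
proof
  assume "\<exists>A :: real \<Rightarrow> real \<Rightarrow> alg.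
              (\<forall>eps \<delta>. online_alg (A eps \<delta>)) \<and>
              (\<exists>eps0>0. \<exists>\<delta>0>0. \<forall>eps \<delta>. 0 < eps \<and> eps < eps0 \<and> 0 < \<delta> \<and> \<delta> < \<delta>0 \<longrightarrow>
                 (\<forall>D. loss_dist D \<longrightarrow> certified (A eps \<delta>) D (n' eps \<delta> D) eps \<delta>))"
  then obtain A eps0 \<delta>0 where A: "\<And>eps \<delta>. online_alg (A eps \<delta>)" and e0: "eps0 > 0" and d0: "\<delta>0 > 0"
    and cert: "\<And>eps \<delta> D. 0 < eps \<Longrightarrow> eps < eps0 \<Longrightarrow> 0 < \<delta> \<Longrightarrow> \<delta> < \<delta>0 \<Longrightarrow> loss_dist D \<Longrightarrow>
                 certified (A eps \<delta>) D (n' eps \<delta> D) eps \<delta>"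
    by blast
  define D1 where "D1 = Bern (1/2)"
  have L1: "loss_dist D1" unfolding D1_def by (rule Bern_loss) auto
  define f where "f = (\<lambda>(eps, \<delta>). n' eps \<delta> D1 * eps^2 / (ln (1/\<delta>) + ln (ln (1/eps))))"
  have "(f \<longlongrightarrow> 0) (at_right (0::real) \<times>\<^sub>F at_right (0::real))" using lim L1 by (simp add: f_def)
  then have "eventually (\<lambda>x. dist (f x) 0 < 1/288) (at_right (0::real) \<times>\<^sub>F at_right (0::real))"
    by (rule tendstoD) simp
  then obtain Pf Pg where Pf: "eventually Pf (at_right (0::real))" and Pg: "eventually Pg (at_right (0::real))"
    and PP: "\<And>x y. Pf x \<Longrightarrow> Pg y \<Longrightarrow> dist (f (x, y)) 0 < 1/288"
    unfolding eventually_prod_filter by blast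
  obtain b1 where b1: "b1 > 0" "\<And>y. y > 0 \<Longrightarrow> y < b1 \<Longrightarrow> Pf y" using Pf unfolding eventually_at_right_field by auto
  obtain b2 where b2: "b2 > 0" "\<And>y. y > 0 \<Longrightarrow> y < b2 \<Longrightarrow> Pg y" using Pg unfolding eventually_at_right_field by auto
  define mm where "mm = min (min eps0 \<delta>0) (min (1/100) (min b1 b2))"
  have mm: "0 < mm" "mm \<le> eps0" "mm \<le> \<delta>0" "mm \<le> 1/100" "mm \<le> b1" "mm \<le> b2"
    using e0 d0 b1(1) b2(1) unfolding mm_def by simp_all
  define e where "e = mm / 2"
  have e: "0 < e" "e < eps0" "e < \<delta>0" "e \<le> 1/100" "e < b1" "e < b2"
    using mm unfolding e_def by linarith+
  have c1: "certified (A e e) (Bern (1/2)) (n' e e D1) e e"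
    using cert[OF e(1) e(2) e(1) e(3) L1] by (simp add: D1_def)
  have L2: "loss_dist (Bern (1/2 + 3*e))" by (rule Bern_loss) (use e in auto)
  have c2: "certified (A e e) (Bern (1/2 + 3*e)) (n' e e (Bern (1/2 + 3*e))) e e"
    by (rule cert[OF e(1) e(2) e(1) e(3) L2])
  have fe: "\<bar>f (e, e)\<bar> < 1/288" using PP[OF b1(2)[OF e(1) e(5)] b2(2)[OF e(1) e(6)]] by simp
  define lg where "lg = ln (1/e)"
  have "exp 1 \<le> 1/e"
  proof -
    have "exp 1 \<le> (3::real)" by (rule exp_le)
    also have "3 \<le> 1/e" using e by (simp add: field_simps)
    finally show ?thesis .
  qed
  then have "ln (exp 1) \<le> ln (1/e)" using e by (subst ln_le_cancel_iff) auto
  then have lg1: "1 \<le> lg" unfolding lg_def by simp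
  have lnlg: "0 \<le> ln lg" "ln lg \<le> lg" using lg1 ln_le_minus_one[of lg] by auto
  define den where "den = lg + ln lg"
  have den: "0 < den" "den \<le> 2 * lg" using lg1 lnlg unfolding den_def by linarith+
  have "f (e, e) = n' e e D1 * e^2 / den" by (simp add: f_def den_def lg_def)
  then have "n' e e D1 * e^2 / den < 1/288" using fe abs_ge_self[of "f (e, e)"] by linarith
  then have "n' e e D1 * e^2 < den / 288" using den(1) by (simp add: field_simps)
  also have "\<dots> \<le> 2 * lg / 288" using den(2) by simp
  finally have nb: "n' e e D1 * e^2 \<le> ln (1/e) / 144" by (simp add: lg_def)
  show False
    by (rule lower_core[OF A e(1) e(4) c1[unfolded D1_def] c2 nb[unfolded D1_def]])
qed

theorem theorem1:
  shows
  "(\<exists>C>0. \<exists>eps0>0. \<forall>eps \<delta>. 0 < eps \<and> eps < eps0 \<and> 0 < \<delta> \<and> \<delta> < 1 \<longrightarrow>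
      (\<exists>A. online_alg A \<and>
         (\<forall>D. loss_dist D \<longrightarrow>
            certified A D (C * (ln (1/\<delta>) + ln (ln (1/eps))) / eps^2) eps \<delta>)))
   \<and>
   (\<forall>n' :: real \<Rightarrow> real \<Rightarrow> real measure \<Rightarrow> real.
      (\<forall>D. loss_dist D \<longrightarrow>
         ((\<lambda>(eps, \<delta>). n' eps \<delta> D * eps^2 / (ln (1/\<delta>) + ln (ln (1/eps)))) \<longlongrightarrow> 0)
           (at_right (0::real) \<times>\<^sub>F at_right (0::real)))
      \<longrightarrow> \<not> (\<exists>A :: real \<Rightarrow> real \<Rightarrow> alg.
              (\<forall>eps \<delta>. online_alg (A eps \<delta>)) \<and>
              (\<exists>eps0>0. \<exists>\<delta>0>0. \<forall>eps \<delta>. 0 < eps \<and> eps < eps0 \<and> 0 < \<delta> \<and> \<delta> < \<delta>0 \<longrightarrow>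
                 (\<forall>D. loss_dist D \<longrightarrow> certified (A eps \<delta>) D (n' eps \<delta> D) eps \<delta>))))"
proof (rule conjI)
  show "\<exists>C>0. \<exists>eps0>0. \<forall>eps \<delta>. 0 < eps \<and> eps < eps0 \<and> 0 < \<delta> \<and> \<delta> < 1 \<longrightarrow>
      (\<exists>A. online_alg A \<and>
         (\<forall>D. loss_dist D \<longrightarrow>
            certified A D (C * (ln (1/\<delta>) + ln (ln (1/eps))) / eps^2) eps \<delta>))"
    by (rule upper)
next
  show "\<forall>n' :: real \<Rightarrow> real \<Rightarrow> real measure \<Rightarrow> real.
      (\<forall>D. loss_dist D \<longrightarrow>
         ((\<lambda>(eps, \<delta>). n' eps \<delta> D * eps^2 / (ln (1/\<delta>) + ln (ln (1/eps)))) \<longlongrightarrow> 0)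
           (at_right (0::real) \<times>\<^sub>F at_right (0::real)))
      \<longrightarrow> \<not> (\<exists>A :: real \<Rightarrow> real \<Rightarrow> alg.
              (\<forall>eps \<delta>. online_alg (A eps \<delta>)) \<and>
              (\<exists>eps0>0. \<exists>\<delta>0>0. \<forall>eps \<delta>. 0 < eps \<and> eps < eps0 \<and> 0 < \<delta> \<and> \<delta> < \<delta>0 \<longrightarrow>
                 (\<forall>D. loss_dist D \<longrightarrow> certified (A eps \<delta>) D (n' eps \<delta> D) eps \<delta>)))"
  proof (intro allI impI)
    fix n' :: "real \<Rightarrow> real \<Rightarrow> real measure \<Rightarrow> real"
    assume lim: "\<forall>D. loss_dist D \<longrightarrow>
         ((\<lambda>(eps, \<delta>). n' eps \<delta> D * eps^2 / (ln (1/\<delta>) + ln (ln (1/eps)))) \<longlongrightarrow> 0)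
           (at_right (0::real) \<times>\<^sub>F at_right (0::real))"
    show "\<not> (\<exists>A :: real \<Rightarrow> real \<Rightarrow> alg.
              (\<forall>eps \<delta>. online_alg (A eps \<delta>)) \<and>
              (\<exists>eps0>0. \<exists>\<delta>0>0. \<forall>eps \<delta>. 0 < eps \<and> eps < eps0 \<and> 0 < \<delta> \<and> \<delta> < \<delta>0 \<longrightarrow>
                 (\<forall>D. loss_dist D \<longrightarrow> certified (A eps \<delta>) D (n' eps \<delta> D) eps \<delta>)))"
      by (rule lower[OF lim])
  qed
qed

end
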